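(* Let $c>0$, $f_s>0$, let $M,N,K\ge1$ be integers, $T_{\max}=(N-1)/f_s$, $\bm{r}^{\mathrm{mic}}_1,\dots,\bm{r}^{\mathrm{mic}}_M\in\mathbb{R}^3$ with $E_M=\{\bm{r}^{\mathrm{mic}}_m\}$, $\bm{x}\in\mathbb{R}^{MN}$. Let $\kappa$ be continuous with $\kappa(0)>0$ and $\lim_{|t|\to\infty}\kappa(t)=0$, and assume $\Gamma^K$ is amplitude lower-bounded. Let $(\bm{a}^l,\bm{r}^l)_{l}$ be a minimizing sequence in $\mathbb{R}_+^K\times\mathscr{C}^K$ for $\inf_{\mathbb{R}_+^K\times\mathscr{C}^K}T$, where $T(\bm{a},\bm{r})=\frac12\|\bm{x}-\sum_{k=1}^K a_k\gamma(\bm{r}_k)\|_2^2$. Then, up to extracting a subsequence, for each $k\in\{1,\dots,K\}$ one of the following holds: (i) there exist $\bm{r}_k\in\mathscr{C}$ and $a_k\in\mathbb{R}_+$ with $\bm{r}^l_k\to\bm{r}_k$ and $a^l_k\to a_k$ as $l\to\infty$; (ii) there exist $m_k\in\{1,\dots,M\}$ and $\widetilde a_k\in\mathbb{R}_+$ with $\bm{r}^l_k\to\bm{r}^{\mathrm{mic}}_{m_k}$, $a^l_k\to0$, and $\dfrac{a^l_k}{4\pi\|\bm{r}^l_k-\bm{r}^{\mathrm{mic}}_{m_k}\|_2}\to\widetilde a_k$ as $l\to\infty$.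
   Context: $\mathbb{R}_+=[0,+\infty)$, $\|\cdot\|_2$ Euclidean norm, $\bm{x}=(x_{m,n})_{1\le m\le M,0\le n\le N-1}$. For $\bm{r}\in\mathbb{R}^3\setminus E_M$, $\gamma_{m,n}(\bm{r})=\dfrac{\kappa\big(n/f_s-\|\bm{r}-\bm{r}^{\mathrm{mic}}_m\|_2/c\big)}{4\pi\|\bm{r}-\bm{r}^{\mathrm{mic}}_m\|_2}$. $\mathscr{C}=\bigcap_{m=1}^M\overline{B(\bm{r}^{\mathrm{mic}}_m,cT_{\max})}\setminus E_M$. $\Gamma^K(\bm{a},\bm{r})=\sum_k a_k\gamma(\bm{r}_k)$; it is amplitude lower-bounded if there is $C>0$ with $\|\Gamma^K(\bm{a},\bm{r})\|_2\ge C\sum_k a_k$ for all $(\bm{a},\bm{r})\in\mathbb{R}_+^K\times\mathscr{C}^K$. *)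

theory Defs
  imports "HOL-Analysis.Analysis"
begin

(* Signals in R^{MN} are represented as functions nat => nat => real,
   indexed by m in {1..M} (microphone) and n in {0..N-1} (sample). *)

definition sig_norm :: "nat \<Rightarrow> nat \<Rightarrow> (nat \<Rightarrow> nat \<Rightarrow> real) \<Rightarrow> real" where
  "sig_norm M N v = sqrt (\<Sum>m\<in>{1..M}. \<Sum>n\<in>{0..<N}. (v m n)\<^sup>2)"

definition gam :: "real \<Rightarrow> real \<Rightarrow> (real \<Rightarrow> real) \<Rightarrow> (nat \<Rightarrow> real^3) \<Rightarrow> real^3 \<Rightarrow> nat \<Rightarrow> nat \<Rightarrow> real" where
  "gam c fs \<kappa> rmic r m n =
     \<kappa> (real n / fs - norm (r - rmic m) / c) / (4 * pi * norm (r - rmic m))"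

definition GammaK :: "real \<Rightarrow> real \<Rightarrow> (real \<Rightarrow> real) \<Rightarrow> (nat \<Rightarrow> real^3) \<Rightarrow> nat
    \<Rightarrow> (nat \<Rightarrow> real) \<Rightarrow> (nat \<Rightarrow> real^3) \<Rightarrow> nat \<Rightarrow> nat \<Rightarrow> real" where
  "GammaK c fs \<kappa> rmic K a r m n = (\<Sum>k\<in>{1..K}. a k * gam c fs \<kappa> rmic (r k) m n)"

definition micset :: "nat \<Rightarrow> (nat \<Rightarrow> real^3) \<Rightarrow> (real^3) set" where
  "micset M rmic = rmic ` {1..M}"

definition Cset :: "real \<Rightarrow> real \<Rightarrow> nat \<Rightarrow> (nat \<Rightarrow> real^3) \<Rightarrow> (real^3) set" where
  "Cset c Tmax M rmic = (\<Inter>m\<in>{1..M}. cball (rmic m) (c * Tmax)) - micset M rmic"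

definition admissible :: "real \<Rightarrow> real \<Rightarrow> nat \<Rightarrow> (nat \<Rightarrow> real^3) \<Rightarrow> nat
    \<Rightarrow> (nat \<Rightarrow> real) \<Rightarrow> (nat \<Rightarrow> real^3) \<Rightarrow> bool" where
  "admissible c Tmax M rmic K a r \<longleftrightarrow> (\<forall>k\<in>{1..K}. a k \<ge> 0 \<and> r k \<in> Cset c Tmax M rmic)"

definition amplitude_lower_bounded :: "real \<Rightarrow> real \<Rightarrow> (real \<Rightarrow> real) \<Rightarrow> real \<Rightarrow> nat \<Rightarrow> nat
    \<Rightarrow> (nat \<Rightarrow> real^3) \<Rightarrow> nat \<Rightarrow> bool" where
  "amplitude_lower_bounded c fs \<kappa> Tmax M N rmic K \<longleftrightarrow>
     (\<exists>C>0. \<forall>a r. admissible c Tmax M rmic K a r \<longrightarrow>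
        sig_norm M N (GammaK c fs \<kappa> rmic K a r) \<ge> C * (\<Sum>k\<in>{1..K}. a k))"

definition Tobj :: "real \<Rightarrow> real \<Rightarrow> (real \<Rightarrow> real) \<Rightarrow> nat \<Rightarrow> nat \<Rightarrow> (nat \<Rightarrow> real^3) \<Rightarrow> nat
    \<Rightarrow> (nat \<Rightarrow> nat \<Rightarrow> real) \<Rightarrow> (nat \<Rightarrow> real) \<Rightarrow> (nat \<Rightarrow> real^3) \<Rightarrow> real" where
  "Tobj c fs \<kappa> M N rmic K x a r =
     1/2 * (sig_norm M N (\<lambda>m n. x m n - GammaK c fs \<kappa> rmic K a r m n))\<^sup>2"

end

theory Submission
  imports Defs
begin

lemma multi_subseq_aux:
  fixes Q :: "nat \<Rightarrow> (nat \<Rightarrow> nat) \<Rightarrow> bool"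
  assumes ext: "\<And>k (\<phi>::nat\<Rightarrow>nat). k \<in> S \<Longrightarrow> strict_mono \<phi> \<Longrightarrow> \<exists>\<psi>::nat\<Rightarrow>nat. strict_mono \<psi> \<and> Q k (\<phi> \<circ> \<psi>)"
    and pres: "\<And>k \<phi> (\<psi>::nat\<Rightarrow>nat). k \<in> S \<Longrightarrow> Q k \<phi> \<Longrightarrow> strict_mono \<psi> \<Longrightarrow> Q k (\<phi> \<circ> \<psi>)"
  shows "finite T \<Longrightarrow> T \<subseteq> S \<Longrightarrow> \<exists>\<phi>. strict_mono \<phi> \<and> (\<forall>k\<in>T. Q k \<phi>)"
proof (induction T rule: finite_induct)
  case empty
  then show ?case using strict_mono_id by blast
next
  case (insert k T)
  then obtain \<phi> where \<phi>: "strict_mono \<phi>" "\<forall>k\<in>T. Q k \<phi>" by blast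
  from ext[of k \<phi>] insert.prems \<phi>(1) obtain \<psi> where \<psi>: "strict_mono \<psi>" "Q k (\<phi> \<circ> \<psi>)" by blast
  have "\<forall>j\<in>insert k T. Q j (\<phi> \<circ> \<psi>)"
    using \<psi> \<phi>(2) pres insert.prems by blast
  moreover have "strict_mono (\<phi> \<circ> \<psi>)" using \<phi>(1) \<psi>(1) strict_mono_o by blast
  ultimately show ?case by blast
qed

lemma sig_norm_comp:
  assumes "m \<in> {1..M}" "n < N"
  shows "\<bar>v m n\<bar> \<le> sig_norm M N v"
proof -
  have "(v m n)\<^sup>2 \<le> (\<Sum>n'\<in>{0..<N}. (v m n')\<^sup>2)"
    by (rule member_le_sum) (use assms in auto)
  also have "\<dots> \<le> (\<Sum>m'\<in>{1..M}. \<Sum>n'\<in>{0..<N}. (v m' n')\<^sup>2)"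
    by (rule member_le_sum[where f = "\<lambda>m'. \<Sum>n'\<in>{0..<N}. (v m' n')\<^sup>2"]) (use assms in \<open>auto intro: sum_nonneg\<close>)
  finally show ?thesis unfolding sig_norm_def by (intro real_le_rsqrt) simp
qed

lemma sig_norm_sq:
  "(sig_norm M N v)\<^sup>2 = (\<Sum>m\<in>{1..M}. \<Sum>n\<in>{0..<N}. (v m n)\<^sup>2)"
  unfolding sig_norm_def by (simp add: sum_nonneg)

lemma sig_norm_diff_bound:
  "sig_norm M N g \<le> sqrt (2 * (sig_norm M N x)\<^sup>2 + 2 * (sig_norm M N (\<lambda>m n. x m n - g m n))\<^sup>2)"
proof -
  have "(\<Sum>m\<in>{1..M}. \<Sum>n\<in>{0..<N}. (g m n)\<^sup>2) \<le>
        (\<Sum>m\<in>{1..M}. \<Sum>n\<in>{0..<N}. 2 * (x m n)\<^sup>2 + 2 * (x m n - g m n)\<^sup>2)"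
  proof (intro sum_mono)
    fix m n
    show "(g m n)\<^sup>2 \<le> 2 * (x m n)\<^sup>2 + 2 * (x m n - g m n)\<^sup>2"
    proof -
      have "0 \<le> (2 * x m n - g m n)\<^sup>2" by simp
      then show ?thesis by (simp add: power2_eq_square algebra_simps)
    qed
  qed
  also have "\<dots> = 2 * (sig_norm M N x)\<^sup>2 + 2 * (sig_norm M N (\<lambda>m n. x m n - g m n))\<^sup>2"
    by (simp add: sig_norm_sq sum.distrib sum_distrib_left)
  finally show ?thesis unfolding sig_norm_def[of M N g] by (intro real_sqrt_le_mono)
qed

theorem lemma1:
  fixes c fs :: real and M N K :: nat
    and rmic :: "nat \<Rightarrow> real^3" and x :: "nat \<Rightarrow> nat \<Rightarrow> real"
    and \<kappa> :: "real \<Rightarrow> real"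
    and al :: "nat \<Rightarrow> nat \<Rightarrow> real" and rl :: "nat \<Rightarrow> nat \<Rightarrow> real^3"
  defines "Tmax \<equiv> (real N - 1) / fs"
  assumes c_pos: "c > 0" and fs_pos: "fs > 0"
    and M_pos: "M \<ge> 1" and N_pos: "N \<ge> 1" and K_pos: "K \<ge> 1"
    and kappa_cont: "continuous_on UNIV \<kappa>" and kappa0: "\<kappa> 0 > 0"
    and kappa_lim: "(\<kappa> \<longlongrightarrow> 0) at_infinity"
    and alb: "amplitude_lower_bounded c fs \<kappa> Tmax M N rmic K"
    and adm: "\<And>l. admissible c Tmax M rmic K (al l) (rl l)"
    and minimizing: "(\<lambda>l. Tobj c fs \<kappa> M N rmic K x (al l) (rl l)) \<longlonglongrightarrow>
        (INF ar\<in>{(a, r). admissible c Tmax M rmic K a r}. Tobj c fs \<kappa> M N rmic K x (fst ar) (snd ar))"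
  shows "\<exists>\<phi>::nat \<Rightarrow> nat. strict_mono \<phi> \<and>
    (\<forall>k\<in>{1..K}.
       (\<exists>r\<in>Cset c Tmax M rmic. \<exists>a\<ge>0.
          (\<lambda>l. rl (\<phi> l) k) \<longlonglongrightarrow> r \<and> (\<lambda>l. al (\<phi> l) k) \<longlonglongrightarrow> a)
     \<or> (\<exists>m\<in>{1..M}. \<exists>atil\<ge>0.
          (\<lambda>l. rl (\<phi> l) k) \<longlonglongrightarrow> rmic m \<and> (\<lambda>l. al (\<phi> l) k) \<longlonglongrightarrow> 0 \<and>
          (\<lambda>l. al (\<phi> l) k / (4 * pi * norm (rl (\<phi> l) k - rmic m))) \<longlonglongrightarrow> atil))"
proof -
  define Cs where "Cs = Cset c Tmax M rmic"
  define G where "G l = GammaK c fs \<kappa> rmic K (al l) (rl l)" for l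
  have admk: "al l k \<ge> 0 \<and> rl l k \<in> Cs" if "k \<in> {1..K}" for l k
    using adm[of l] that unfolding admissible_def Cs_def by blast
  have "Bseq (\<lambda>l. Tobj c fs \<kappa> M N rmic K x (al l) (rl l))"
    using minimizing by (intro convergent_imp_Bseq) (auto simp: convergent_def)
  then obtain S where S: "\<And>l. \<bar>Tobj c fs \<kappa> M N rmic K x (al l) (rl l)\<bar> \<le> S"
    unfolding Bseq_def by auto
  define Gb where "Gb = sqrt (2 * (sig_norm M N x)\<^sup>2 + 4 * S)"
  have Gb: "sig_norm M N (G l) \<le> Gb" for l
  proof -
    have "(sig_norm M N (\<lambda>m n. x m n - G l m n))\<^sup>2 \<le> 2 * S"
      using S[of l] unfolding Tobj_def G_def by simp
    then have "2 * (sig_norm M N x)\<^sup>2 + 2 * (sig_norm M N (\<lambda>m n. x m n - G l m n))\<^sup>2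
        \<le> 2 * (sig_norm M N x)\<^sup>2 + 4 * S" by simp
    then show ?thesis unfolding Gb_def
      using sig_norm_diff_bound[of M N "G l" x] real_sqrt_le_mono order_trans by blast
  qed
  from alb obtain C where C: "C > 0" and Cb: "\<And>a r. admissible c Tmax M rmic K a r \<Longrightarrow>
        sig_norm M N (GammaK c fs \<kappa> rmic K a r) \<ge> C * (\<Sum>k\<in>{1..K}. a k)"
    unfolding amplitude_lower_bounded_def by blast
  define A where "A = Gb / C"
  have abound: "al l k \<le> A" if "k \<in> {1..K}" for l k
  proof -
    have "al l k \<le> (\<Sum>k\<in>{1..K}. al l k)"
      by (rule member_le_sum) (use that admk in auto)
    also have "C * (\<Sum>k\<in>{1..K}. al l k) \<le> Gb"
      using Cb[OF adm[of l]] Gb[of l] unfolding G_def by linarith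
    then have "(\<Sum>k\<in>{1..K}. al l k) \<le> A" unfolding A_def using C by (simp add: field_simps mult.commute)
    finally show ?thesis .
  qed
  have A_nonneg: "A \<ge> 0" using abound[of 1 0] admk[of 1 0] K_pos by auto
  obtain Km where Km: "\<And>t. \<bar>\<kappa> t\<bar> \<le> Km"
  proof -
    have "eventually (\<lambda>t. dist (\<kappa> t) 0 < 1) at_infinity"
      using kappa_lim tendsto_iff zero_less_one by blast
    then obtain b where b: "\<And>t::real. b \<le> norm t \<Longrightarrow> dist (\<kappa> t) 0 < 1"
      unfolding eventually_at_infinity by blast
    have "compact (\<kappa> ` cball 0 b)"
      by (rule compact_continuous_image) (use kappa_cont continuous_on_subset in auto)
    then obtain a where a: "\<And>y. y \<in> \<kappa> ` cball 0 b \<Longrightarrow> norm y \<le> a"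
      using compact_imp_bounded bounded_iff by metis
    have "\<bar>\<kappa> t\<bar> \<le> max a 1" for t
    proof (cases "norm t \<le> b")
      case True then show ?thesis using a[of "\<kappa> t"] by auto
    next
      case False then show ?thesis using b[of t] by auto
    qed
    then show ?thesis using that by blast
  qed
  have Km_nonneg: "Km \<ge> 0" using Km[of 0] by auto
  have "isCont \<kappa> 0" using kappa_cont continuous_on_eq_continuous_at by blast
  then obtain \<delta> where \<delta>: "\<delta> > 0" and \<delta>b: "\<And>t. dist t 0 < \<delta> \<Longrightarrow> dist (\<kappa> t) (\<kappa> 0) < \<kappa> 0 / 2"
    unfolding continuous_at_eps_delta using kappa0 by (metis half_gt_zero)
  have kap_pos: "\<kappa> t \<ge> \<kappa> 0 / 2" if "\<bar>t\<bar> < \<delta>" for t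
  proof -
    have "\<bar>\<kappa> t - \<kappa> 0\<bar> < \<kappa> 0 / 2" using \<delta>b[of t] that by (simp add: dist_real_def)
    then show ?thesis by linarith
  qed
  define E where "E = A * Km / (4 * pi * c * \<delta>)"
  have E_nonneg: "E \<ge> 0" unfolding E_def using A_nonneg Km_nonneg c_pos \<delta> by simp
  define trm where "trm l k m = al l k * gam c fs \<kappa> rmic (rl l k) m 0" for l k m
  have dpos: "norm (rl l k - rmic m) > 0" if "k \<in> {1..K}" "m \<in> {1..M}" for l k m
  proof -
    have "rl l k \<notin> micset M rmic" using admk[OF that(1)] unfolding Cs_def Cset_def by blast
    then have "rl l k \<noteq> rmic m" using that(2) unfolding micset_def by blast
    then show ?thesis by simp
  qed
  have term_eq: "trm l k m = al l k * \<kappa> (- (norm (rl l k - rmic m) / c)) / (4 * pi * norm (rl l k - rmic m))" for l k m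
    unfolding trm_def gam_def by simp
  have term_small: "trm l k m \<ge> (\<kappa> 0 / 2) * (al l k / (4 * pi * norm (rl l k - rmic m)))"
    if "k \<in> {1..K}" "m \<in> {1..M}" "norm (rl l k - rmic m) < c * \<delta>" for l k m
  proof -
    define d where "d = norm (rl l k - rmic m)"
    have d: "d > 0" using dpos[OF that(1,2)] d_def by simp
    have "\<bar>- (d / c)\<bar> < \<delta>" using that(3) d c_pos unfolding d_def[symmetric]
      by (simp add: pos_divide_less_eq mult.commute)
    then have k: "\<kappa> (- (d / c)) \<ge> \<kappa> 0 / 2" by (rule kap_pos)
    have "al l k * (\<kappa> 0 / 2) \<le> al l k * \<kappa> (- (d / c))"
      using k admk[OF that(1)] by (intro mult_left_mono) auto
    then have "al l k * (\<kappa> 0 / 2) / (4 * pi * d) \<le> al l k * \<kappa> (- (d / c)) / (4 * pi * d)"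
      using d by (intro divide_right_mono) auto
    then show ?thesis unfolding term_eq d_def[symmetric] by (simp add: field_simps)
  qed
  have term_lb: "trm l k m \<ge> - E" if "k \<in> {1..K}" "m \<in> {1..M}" for l k m
  proof (cases "norm (rl l k - rmic m) < c * \<delta>")
    case True
    have "0 \<le> (\<kappa> 0 / 2) * (al l k / (4 * pi * norm (rl l k - rmic m)))"
      using kappa0 admk[OF that(1)] dpos[OF that] by simp
    then show ?thesis using term_small[OF that True] E_nonneg by linarith
  next
    case False
    define d where "d = norm (rl l k - rmic m)"
    have d: "d \<ge> c * \<delta>" using False d_def by simp
    have d0: "d \<ge> 0" unfolding d_def by simp
    have dp: "d > 0" using d mult_pos_pos[OF c_pos \<delta>] by linarith
    have cd: "4 * pi * c * \<delta> > 0" using c_pos \<delta> by simp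
    have "\<bar>trm l k m\<bar> = al l k * \<bar>\<kappa> (- (d / c))\<bar> / (4 * pi * d)"
      unfolding term_eq d_def[symmetric] using admk[OF that(1)] d cd mult_pos_pos[OF c_pos \<delta>]
      by (simp add: abs_mult)
    also have "\<dots> \<le> A * Km / (4 * pi * d)"
      using abound[OF that(1)] Km admk[OF that(1)] d cd A_nonneg d0
      by (intro divide_right_mono mult_mono) auto
    also have "\<dots> \<le> A * Km / (4 * pi * c * \<delta>)"
      using d cd A_nonneg Km_nonneg dp c_pos \<delta> by (intro divide_left_mono) auto
    finally show ?thesis unfolding E_def by linarith
  qed
  have sig_nonneg: "sig_norm M N v \<ge> 0" for v unfolding sig_norm_def by (simp add: sum_nonneg)
  have Gb_nonneg: "Gb \<ge> 0" using Gb[of 0] sig_nonneg[of "G 0"] by linarith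
  have term_ub: "trm l k m \<le> Gb + K * E" if "k \<in> {1..K}" "m \<in> {1..M}" for l k m
  proof -
    have Gs: "G l m 0 = (\<Sum>k'\<in>{1..K}. trm l k' m)"
      unfolding G_def GammaK_def trm_def by simp
    also have "\<dots> = trm l k m + (\<Sum>k'\<in>{1..K} - {k}. trm l k' m)"
      using that(1) by (simp add: sum.remove)
    finally have eq: "trm l k m = G l m 0 - (\<Sum>k'\<in>{1..K} - {k}. trm l k' m)" by simp
    have "(\<Sum>k'\<in>{1..K} - {k}. - E) \<le> (\<Sum>k'\<in>{1..K} - {k}. trm l k' m)"
      using term_lb that(2) by (intro sum_mono) auto
    moreover have "(\<Sum>k'\<in>{1..K} - {k}. - E) \<ge> - (K * E)"
    proof -
      have "card ({1..K} - {k}) \<le> K" using card_Diff1_le[of "{1..K}" k] by simp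
      then have "real (card ({1..K} - {k})) * E \<le> real K * E"
        using E_nonneg by (intro mult_right_mono) auto
      then show ?thesis by simp
    qed
    moreover have "G l m 0 \<le> Gb"
      using sig_norm_comp[OF that(2), of 0 N "G l"] N_pos Gb[of l] by simp
    ultimately show ?thesis using eq by linarith
  qed
  define R where "R = 2 * (Gb + K * E) / \<kappa> 0 + A / (4 * pi * c * \<delta>)"
  have ratio_nonneg: "al l k / (4 * pi * norm (rl l k - rmic m)) \<ge> 0"
    if "k \<in> {1..K}" for l k m
    using admk[OF that] by simp
  have ratio_b: "al l k / (4 * pi * norm (rl l k - rmic m)) \<le> R"
    if "k \<in> {1..K}" "m \<in> {1..M}" for l k m
  proof -
    have R1: "2 * (Gb + K * E) / \<kappa> 0 \<ge> 0" using Gb_nonneg E_nonneg kappa0 by simp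
    have R2: "A / (4 * pi * c * \<delta>) \<ge> 0" using A_nonneg c_pos \<delta> by simp
    show ?thesis
    proof (cases "norm (rl l k - rmic m) < c * \<delta>")
      case True
      have "(\<kappa> 0 / 2) * (al l k / (4 * pi * norm (rl l k - rmic m))) \<le> Gb + K * E"
        using term_small[OF that True] term_ub[OF that, of l] by linarith
      then have "al l k / (4 * pi * norm (rl l k - rmic m)) \<le> 2 * (Gb + K * E) / \<kappa> 0"
        using kappa0 by (simp add: field_simps)
      then show ?thesis unfolding R_def using R2 by linarith
    next
      case False
      have "al l k / (4 * pi * norm (rl l k - rmic m)) \<le> A / (4 * pi * norm (rl l k - rmic m))"
        using abound[OF that(1)] by (simp add: divide_right_mono)
      also have "\<dots> \<le> A / (4 * pi * c * \<delta>)"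
        using False A_nonneg c_pos \<delta> dpos[OF that] by (intro divide_left_mono) auto
      finally show ?thesis unfolding R_def using R1 by linarith
    qed
  qed
  have rl_cball: "rl l k \<in> (\<Inter>m\<in>{1..M}. cball (rmic m) (c * Tmax))" if "k \<in> {1..K}" for l k
    using admk[OF that] unfolding Cs_def Cset_def by blast
  have sub: "(\<lambda>n. X (\<psi> n)) \<longlonglongrightarrow> L" if "X \<longlonglongrightarrow> L" "strict_mono \<psi>"
    for X :: "nat \<Rightarrow> 'z::topological_space" and L \<psi>
    using LIMSEQ_subseq_LIMSEQ[OF that] by (simp add: o_def)
  define Q where "Q k \<phi> \<longleftrightarrow>
       (\<exists>r\<in>Cset c Tmax M rmic. \<exists>a\<ge>0.
          (\<lambda>l. rl (\<phi> l) k) \<longlonglongrightarrow> r \<and> (\<lambda>l. al (\<phi> l) k) \<longlonglongrightarrow> a)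
     \<or> (\<exists>m\<in>{1..M}. \<exists>atil\<ge>0.
          (\<lambda>l. rl (\<phi> l) k) \<longlonglongrightarrow> rmic m \<and> (\<lambda>l. al (\<phi> l) k) \<longlonglongrightarrow> 0 \<and>
          (\<lambda>l. al (\<phi> l) k / (4 * pi * norm (rl (\<phi> l) k - rmic m))) \<longlonglongrightarrow> atil)"
    for k and \<phi> :: "nat \<Rightarrow> nat"
  have pres: "Q k (\<phi> \<circ> \<psi>)" if "k \<in> {1..K}" "Q k \<phi>" "strict_mono \<psi>" for k \<phi> \<psi>
  proof -
    from that(2)[unfolded Q_def] show ?thesis
    proof (elim disjE bexE exE conjE)
      fix r a assume h: "r \<in> Cset c Tmax M rmic" "a \<ge> 0" "(\<lambda>l. rl (\<phi> l) k) \<longlonglongrightarrow> r" "(\<lambda>l. al (\<phi> l) k) \<longlonglongrightarrow> a"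
      have "(\<lambda>l. rl ((\<phi> \<circ> \<psi>) l) k) \<longlonglongrightarrow> r" using sub[OF h(3) that(3)] by simp
      moreover have "(\<lambda>l. al ((\<phi> \<circ> \<psi>) l) k) \<longlonglongrightarrow> a" using sub[OF h(4) that(3)] by simp
      ultimately show ?thesis unfolding Q_def using h(1,2) by blast
    next
      fix m atil assume h: "m \<in> {1..M}" "atil \<ge> 0" "(\<lambda>l. rl (\<phi> l) k) \<longlonglongrightarrow> rmic m" "(\<lambda>l. al (\<phi> l) k) \<longlonglongrightarrow> 0"
          "(\<lambda>l. al (\<phi> l) k / (4 * pi * norm (rl (\<phi> l) k - rmic m))) \<longlonglongrightarrow> atil"
      have "(\<lambda>l. rl ((\<phi> \<circ> \<psi>) l) k) \<longlonglongrightarrow> rmic m" using sub[OF h(3) that(3)] by simp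
      moreover have "(\<lambda>l. al ((\<phi> \<circ> \<psi>) l) k) \<longlonglongrightarrow> 0" using sub[OF h(4) that(3)] by simp
      moreover have "(\<lambda>l. al ((\<phi> \<circ> \<psi>) l) k / (4 * pi * norm (rl ((\<phi> \<circ> \<psi>) l) k - rmic m))) \<longlonglongrightarrow> atil"
        using sub[OF h(5) that(3)] by simp
      ultimately show ?thesis unfolding Q_def using h(1,2) by blast
    qed
  qed
  have ext: "\<exists>\<psi>::nat\<Rightarrow>nat. strict_mono \<psi> \<and> Q k (\<phi> \<circ> \<psi>)" if k: "k \<in> {1..K}" and \<phi>: "strict_mono \<phi>" for k \<phi>
  proof -
    define p where "p l = (rl (\<phi> l) k, al (\<phi> l) k)" for l
    have "range p \<subseteq> cball (rmic 1) (c * Tmax) \<times> {0..A}"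
      using rl_cball[OF k] M_pos admk[OF k] abound[OF k] unfolding p_def by fastforce
    then have "bounded (range p)"
      by (rule bounded_subset[rotated]) (intro bounded_Times bounded_cball bounded_closed_interval)
    then obtain L \<psi>1 where \<psi>1: "strict_mono \<psi>1" and L: "(p \<circ> \<psi>1) \<longlonglongrightarrow> L"
      using bounded_imp_convergent_subsequence by blast
    have hr: "(\<lambda>n. rl (\<phi> (\<psi>1 n)) k) \<longlonglongrightarrow> fst L"
      using tendsto_fst[OF L] by (simp add: p_def o_def)
    have ha: "(\<lambda>n. al (\<phi> (\<psi>1 n)) k) \<longlonglongrightarrow> snd L"
      using tendsto_snd[OF L] by (simp add: p_def o_def)
    show ?thesis
    proof (cases "fst L \<in> micset M rmic")
      case False
      have "fst L \<in> (\<Inter>m\<in>{1..M}. cball (rmic m) (c * Tmax))"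
        by (rule closed_sequentially[OF _ _ hr]) (use rl_cball[OF k] in auto)
      then have inC: "fst L \<in> Cset c Tmax M rmic" using False unfolding Cset_def by blast
      have "snd L \<ge> 0"
        by (rule tendsto_lowerbound[OF ha]) (use admk[OF k] in auto)
      then have "Q k (\<phi> \<circ> \<psi>1)" unfolding Q_def comp_apply using inC hr ha by blast
      then show ?thesis using \<psi>1 by blast
    next
      case True
      then obtain m where m: "m \<in> {1..M}" and Lm: "fst L = rmic m" unfolding micset_def by blast
      define q where "q n = al (\<phi> (\<psi>1 n)) k / (4 * pi * norm (rl (\<phi> (\<psi>1 n)) k - rmic m))" for n
      have "bounded (range q)" unfolding bounded_iff q_def
      proof (intro exI[of _ R] allI ballI)
        fix y assume "y \<in> range (\<lambda>n. al (\<phi> (\<psi>1 n)) k / (4 * pi * norm (rl (\<phi> (\<psi>1 n)) k - rmic m)))"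
        then obtain n where y: "y = al (\<phi> (\<psi>1 n)) k / (4 * pi * norm (rl (\<phi> (\<psi>1 n)) k - rmic m))" by blast
        show "norm y \<le> R" using ratio_b[OF k m, of "\<phi> (\<psi>1 n)"] ratio_nonneg[OF k, of "\<phi> (\<psi>1 n)" m]
          unfolding y by simp
      qed
      then obtain atil \<psi>2 where \<psi>2: "strict_mono \<psi>2" and hq: "(q \<circ> \<psi>2) \<longlonglongrightarrow> atil"
        using bounded_imp_convergent_subsequence by blast
      have hq': "(\<lambda>n. q (\<psi>2 n)) \<longlonglongrightarrow> atil" using hq by (simp add: o_def)
      have hr2: "(\<lambda>n. rl (\<phi> (\<psi>1 (\<psi>2 n))) k) \<longlonglongrightarrow> rmic m" using sub[OF hr \<psi>2] Lm by simp
      have atil0: "atil \<ge> 0"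
        by (rule tendsto_lowerbound[OF hq']) (use ratio_nonneg[OF k] in \<open>auto simp: q_def\<close>)
      have hd: "(\<lambda>n. 4 * pi * norm (rl (\<phi> (\<psi>1 (\<psi>2 n))) k - rmic m)) \<longlonglongrightarrow> 4 * pi * norm (rmic m - rmic m)"
        by (intro tendsto_intros hr2)
      have "(\<lambda>n. q (\<psi>2 n) * (4 * pi * norm (rl (\<phi> (\<psi>1 (\<psi>2 n))) k - rmic m))) \<longlonglongrightarrow> atil * (4 * pi * norm (rmic m - rmic m))"
        by (rule tendsto_mult[OF hq' hd])
      moreover have "q (\<psi>2 n) * (4 * pi * norm (rl (\<phi> (\<psi>1 (\<psi>2 n))) k - rmic m)) = al (\<phi> (\<psi>1 (\<psi>2 n))) k" for n
        unfolding q_def using dpos[OF k m, of "\<phi> (\<psi>1 (\<psi>2 n))"] by simp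
      ultimately have ha2: "(\<lambda>n. al (\<phi> (\<psi>1 (\<psi>2 n))) k) \<longlonglongrightarrow> 0" by simp
      have "Q k (\<phi> \<circ> (\<psi>1 \<circ> \<psi>2))" unfolding Q_def comp_apply
        using m atil0 hr2 ha2 hq' unfolding q_def by blast
      then show ?thesis using strict_mono_o[OF \<psi>1 \<psi>2] by blast
    qed
  qed
  obtain \<phi> where "strict_mono \<phi>" "\<forall>k\<in>{1..K}. Q k \<phi>"
    using multi_subseq_aux[of "{1..K}" Q "{1..K}"] ext pres by blast
  then show ?thesis unfolding Q_def Cs_def by blast
qed

end
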